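(* Let $\{(G_n,\Psi_n,\varphi^L_n,\varphi^U_n)\}_{n\ge0}$ be an $\mathcal{F}$-system (with $\varphi^U_n>0$) satisfying Condition $\Gamma$, with induced Cantor system $(X,H_X)$, and assume its associated fence $\mathbf{F}_\Phi$ is a Scissorhand fence. Then there exists a unique continuous surjection $T:\mathbf{F}_\Phi\to\mathbf{F}_\Phi$ having $H_X$ as a factor (i.e. $\pi\circ T=H_X\circ\pi$, where $\pi(x,t)=x$) and satisfying $T(x,\varphi^U(x))=(H_X(x),\varphi^U(H_X(x)))$ for all $x\in X$. Moreover: (1) if $H_X$ is a homeomorphism, then $T$ is a homeomorphism of $\mathbf{F}_\Phi$; (2) if $s$ and $H_X$ are both Lipschitz, then so is $T$; (3) if $s$ and $1/s$ are both Lipschitz and $H_X$ is bi-Lipschitz, then $T$ is bi-Lipschitz; (4) if $s\equiv1$ and $H_X$ is an isometry, then $T$ is an isometry.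
   Context: An $\mathcal{F}$-system consists of: finite directed graphs $G_n$ ($n\ge0$), each vertex having at least one outgoing and one incoming edge; surjective maps $\Psi_n:G_{n+1}\to G_n$ sending edges to edges; such that (i) for each $n$ and $v\in G_n$ there are $m>n$ and distinct $v',v''\in G_{m+1}$ with $\Psi_n\circ\cdots\circ\Psi_m(v')=\Psi_n\circ\cdots\circ\Psi_m(v'')=v$; (ii) for every $m$ there is $n>m$ such that for every $g\in G_n$ the set $\{\Psi_m\circ\cdots\circ\Psi_{n-1}(g'):\overrightarrow{gg'}\in G_n\}$ has exactly one element; and maps $\varphi^L_n,\varphi^U_n:G_n\to[0,1]$ with $\varphi^L_n\le\varphi^U_n$, $\varphi^U_{n+1}(v')\le\varphi^U_n(\Psi_n(v'))$, $\varphi^L_{n+1}(v')\ge\varphi^L_n(\Psi_n(v'))$, and such that for every $g\in G_n$ there is $g'\in G_{n+1}$ with $\Psi_n(g')=g$, $\varphi^L_{n+1}(g')=\varphi^L_n(g)$, $\varphi^U_{n+1}(g')=\varphi^U_n(g)$. $X=\{x\in\prod_n G_n: x(n)=\Psi_n(x(n+1))\ \forall n\}$ with metric $d(x,y)=2^{-n}$, $n$ the least index with $x(n)\ne y(n)$; $H_X:X\to X$ is the continuous surjection whose graph is $\{(x,y)\in X^2:\overrightarrow{x(n)y(n)}\in G_n\ \forall n\}$. $\varphi^U(x)=\lim_n\varphi^U_n(x(n))$, $\varphi^L(x)=\lim_n\varphi^L_n(x(n))$, $\Phi=(\varphi^L,\varphi^U)$ and $\mathbf{F}_\Phi=\{(x,t)\in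 X\times[0,1]:\varphi^L(x)\le t\le\varphi^U(x)\}$, with the maximum metric of $X\times[0,1]$. It is a Scissorhand fence if the graph of $\varphi^U$ is dense in $\mathbf{F}_\Phi$ and $\{x:\varphi^L(x)\ne\varphi^U(x)\}$ is dense in $X$. For $u,v\in G_n$, $s_n(u,v)=\varphi^U_n(v)/\varphi^U_n(u)$; for an edge $\overrightarrow{uv}\in G_n$, $\Gamma_n(\overrightarrow{uv})=\max\{|s_n(v,u)-s_{n+1}(v',u')|,|s_n(u,v)-s_{n+1}(u',v')| : \overrightarrow{u'v'}\in G_{n+1},\Psi_n(u')=u,\Psi_n(v')=v\}$, $\Gamma_n=\max\Gamma_n(\overrightarrow{uv})$; Condition $\Gamma$: $\sum_n\Gamma_n<1$. Finally $s:X\to\mathbb{R}$, $s(x)=\lim_n s_n(x(n),H_X(x)(n))$. *)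

theory Defs
  imports "HOL-Analysis.Analysis"
begin

text \<open>An F-system is given by: vertex sets V n of the graphs G_n, edge relations E n
  (E n u v means there is an edge from u to v in G_n), bonding maps Psi n : G_(n+1) -> G_n,
  and the maps phiL n, phiU n : G_n -> [0,1].\<close>

text \<open>proj Psi n k = Psi_n o Psi_(n+1) o ... o Psi_(n+k-1), a map G_(n+k) -> G_n.\<close>
fun proj :: "(nat \<Rightarrow> 'v \<Rightarrow> 'v) \<Rightarrow> nat \<Rightarrow> nat \<Rightarrow> 'v \<Rightarrow> 'v" where
  "proj Psi n 0 v = v"
| "proj Psi n (Suc k) v = proj Psi n k (Psi (n + k) v)"

definition F_system ::
  "(nat \<Rightarrow> 'v set) \<Rightarrow> (nat \<Rightarrow> 'v \<Rightarrow> 'v \<Rightarrow> bool) \<Rightarrow> (nat \<Rightarrow> 'v \<Rightarrow> 'v)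
   \<Rightarrow> (nat \<Rightarrow> 'v \<Rightarrow> real) \<Rightarrow> (nat \<Rightarrow> 'v \<Rightarrow> real) \<Rightarrow> bool" where
  "F_system V E Psi phiL phiU \<longleftrightarrow>
     \<comment> \<open>finite directed graphs, every vertex has an outgoing and an incoming edge\<close>
     (\<forall>n. finite (V n)) \<and>
     (\<forall>n u v. E n u v \<longrightarrow> u \<in> V n \<and> v \<in> V n) \<and>
     (\<forall>n. \<forall>v\<in>V n. (\<exists>w. E n v w) \<and> (\<exists>w. E n w v)) \<and>
     \<comment> \<open>Psi n is a surjective graph homomorphism G_(n+1) -> G_n (on vertices and edges)\<close>
     (\<forall>n. Psi n ` V (Suc n) = V n) \<and>
     (\<forall>n u v. E (Suc n) u v \<longrightarrow> E n (Psi n u) (Psi n v)) \<and>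
     (\<forall>n u v. E n u v \<longrightarrow> (\<exists>u' v'. E (Suc n) u' v' \<and> Psi n u' = u \<and> Psi n v' = v)) \<and>
     \<comment> \<open>condition (i)\<close>
     (\<forall>n. \<forall>v\<in>V n. \<exists>m>n. \<exists>v' v''. v' \<in> V (Suc m) \<and> v'' \<in> V (Suc m) \<and> v' \<noteq> v'' \<and>
         proj Psi n (Suc m - n) v' = v \<and> proj Psi n (Suc m - n) v'' = v) \<and>
     \<comment> \<open>condition (ii)\<close>
     (\<forall>m. \<exists>n>m. \<forall>g\<in>V n. \<exists>w. proj Psi m (n - m) ` {g'. E n g g'} = {w}) \<and>
     \<comment> \<open>conditions on phiL, phiU\<close>
     (\<forall>n. \<forall>v\<in>V n. 0 \<le> phiL n v \<and> phiL n v \<le> phiU n v \<and> phiU n v \<le> 1) \<and>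
     (\<forall>n. \<forall>v'\<in>V (Suc n). phiU (Suc n) v' \<le> phiU n (Psi n v') \<and>
                           phiL (Suc n) v' \<ge> phiL n (Psi n v')) \<and>
     (\<forall>n. \<forall>g\<in>V n. \<exists>g'\<in>V (Suc n). Psi n g' = g \<and> phiL (Suc n) g' = phiL n g \<and>
                                  phiU (Suc n) g' = phiU n g)"

definition Xsp :: "(nat \<Rightarrow> 'v set) \<Rightarrow> (nat \<Rightarrow> 'v \<Rightarrow> 'v) \<Rightarrow> (nat \<Rightarrow> 'v) set" where
  "Xsp V Psi = {x. (\<forall>n. x n \<in> V n) \<and> (\<forall>n. x n = Psi n (x (Suc n)))}"

definition dX :: "(nat \<Rightarrow> 'v) \<Rightarrow> (nat \<Rightarrow> 'v) \<Rightarrow> real" where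
  "dX x y = (if x = y then 0 else (1/2) ^ (LEAST n. x n \<noteq> y n))"

definition HX :: "(nat \<Rightarrow> 'v set) \<Rightarrow> (nat \<Rightarrow> 'v \<Rightarrow> 'v \<Rightarrow> bool) \<Rightarrow> (nat \<Rightarrow> 'v \<Rightarrow> 'v)
    \<Rightarrow> (nat \<Rightarrow> 'v) \<Rightarrow> (nat \<Rightarrow> 'v)" where
  "HX V E Psi x = (THE y. y \<in> Xsp V Psi \<and> (\<forall>n. E n (x n) (y n)))"

definition phi_lim :: "(nat \<Rightarrow> 'v \<Rightarrow> real) \<Rightarrow> (nat \<Rightarrow> 'v) \<Rightarrow> real" where
  "phi_lim phi x = lim (\<lambda>n. phi n (x n))"

definition fence :: "(nat \<Rightarrow> 'v set) \<Rightarrow> (nat \<Rightarrow> 'v \<Rightarrow> 'v) \<Rightarrow> (nat \<Rightarrow> 'v \<Rightarrow> real)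
    \<Rightarrow> (nat \<Rightarrow> 'v \<Rightarrow> real) \<Rightarrow> ((nat \<Rightarrow> 'v) \<times> real) set" where
  "fence V Psi phiL phiU =
     {(x, t). x \<in> Xsp V Psi \<and> phi_lim phiL x \<le> t \<and> t \<le> phi_lim phiU x}"

definition dF :: "(nat \<Rightarrow> 'v) \<times> real \<Rightarrow> (nat \<Rightarrow> 'v) \<times> real \<Rightarrow> real" where
  "dF p q = max (dX (fst p) (fst q)) \<bar>snd p - snd q\<bar>"

definition scissorhand :: "(nat \<Rightarrow> 'v set) \<Rightarrow> (nat \<Rightarrow> 'v \<Rightarrow> 'v) \<Rightarrow> (nat \<Rightarrow> 'v \<Rightarrow> real)
    \<Rightarrow> (nat \<Rightarrow> 'v \<Rightarrow> real) \<Rightarrow> bool" where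
  "scissorhand V Psi phiL phiU \<longleftrightarrow>
     (\<forall>p\<in>fence V Psi phiL phiU. \<forall>e>0. \<exists>x\<in>Xsp V Psi. dF p (x, phi_lim phiU x) < e) \<and>
     (\<forall>x\<in>Xsp V Psi. \<forall>e>0. \<exists>y\<in>Xsp V Psi. phi_lim phiL y \<noteq> phi_lim phiU y \<and> dX x y < e)"

definition sn :: "(nat \<Rightarrow> 'v \<Rightarrow> real) \<Rightarrow> nat \<Rightarrow> 'v \<Rightarrow> 'v \<Rightarrow> real" where
  "sn phiU n u v = phiU n v / phiU n u"

definition Gamma_edge :: "(nat \<Rightarrow> 'v \<Rightarrow> 'v \<Rightarrow> bool) \<Rightarrow> (nat \<Rightarrow> 'v \<Rightarrow> 'v) \<Rightarrow> (nat \<Rightarrow> 'v \<Rightarrow> real)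
    \<Rightarrow> nat \<Rightarrow> 'v \<Rightarrow> 'v \<Rightarrow> real" where
  "Gamma_edge E Psi phiU n u v = Max (insert 0 (\<Union>{{\<bar>sn phiU n v u - sn phiU (Suc n) v' u'\<bar>,
        \<bar>sn phiU n u v - sn phiU (Suc n) u' v'\<bar>} | u' v'.
        E (Suc n) u' v' \<and> Psi n u' = u \<and> Psi n v' = v}))"

definition Gamma :: "(nat \<Rightarrow> 'v \<Rightarrow> 'v \<Rightarrow> bool) \<Rightarrow> (nat \<Rightarrow> 'v \<Rightarrow> 'v) \<Rightarrow> (nat \<Rightarrow> 'v \<Rightarrow> real)
    \<Rightarrow> nat \<Rightarrow> real" where
  "Gamma E Psi phiU n = Max (insert 0 {Gamma_edge E Psi phiU n u v | u v. E n u v})"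

definition condition_Gamma :: "(nat \<Rightarrow> 'v \<Rightarrow> 'v \<Rightarrow> bool) \<Rightarrow> (nat \<Rightarrow> 'v \<Rightarrow> 'v)
    \<Rightarrow> (nat \<Rightarrow> 'v \<Rightarrow> real) \<Rightarrow> bool" where
  "condition_Gamma E Psi phiU \<longleftrightarrow>
     summable (Gamma E Psi phiU) \<and> suminf (Gamma E Psi phiU) < 1"

definition s_fun :: "(nat \<Rightarrow> 'v set) \<Rightarrow> (nat \<Rightarrow> 'v \<Rightarrow> 'v \<Rightarrow> bool) \<Rightarrow> (nat \<Rightarrow> 'v \<Rightarrow> 'v)
    \<Rightarrow> (nat \<Rightarrow> 'v \<Rightarrow> real) \<Rightarrow> (nat \<Rightarrow> 'v) \<Rightarrow> real" where
  "s_fun V E Psi phiU x = lim (\<lambda>n. sn phiU n (x n) (HX V E Psi x n))"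

definition lipschitz_map :: "'a set \<Rightarrow> ('a \<Rightarrow> 'a \<Rightarrow> real) \<Rightarrow> ('b \<Rightarrow> 'b \<Rightarrow> real) \<Rightarrow> ('a \<Rightarrow> 'b) \<Rightarrow> bool" where
  "lipschitz_map M d1 d2 f \<longleftrightarrow> (\<exists>B. \<forall>x\<in>M. \<forall>y\<in>M. d2 (f x) (f y) \<le> B * d1 x y)"

definition bi_lipschitz_map :: "'a set \<Rightarrow> ('a \<Rightarrow> 'a \<Rightarrow> real) \<Rightarrow> ('b \<Rightarrow> 'b \<Rightarrow> real) \<Rightarrow> ('a \<Rightarrow> 'b) \<Rightarrow> bool" where
  "bi_lipschitz_map M d1 d2 f \<longleftrightarrow>
     (\<exists>A>0. \<exists>B. \<forall>x\<in>M. \<forall>y\<in>M. A * d1 x y \<le> d2 (f x) (f y) \<and> d2 (f x) (f y) \<le> B * d1 x y)"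

definition isometric_map :: "'a set \<Rightarrow> ('a \<Rightarrow> 'a \<Rightarrow> real) \<Rightarrow> ('b \<Rightarrow> 'b \<Rightarrow> real) \<Rightarrow> ('a \<Rightarrow> 'b) \<Rightarrow> bool" where
  "isometric_map M d1 d2 f \<longleftrightarrow> (\<forall>x\<in>M. \<forall>y\<in>M. d2 (f x) (f y) = d1 x y)"

definition rdist :: "real \<Rightarrow> real \<Rightarrow> real" where
  "rdist a b = \<bar>a - b\<bar>"

end

theory Submission
  imports Defs
begin


lemma tail_conv:
  fixes f g :: "nat \<Rightarrow> real"
  assumes sg: "summable g" and d: "\<And>n. \<bar>f (Suc n) - f n\<bar> \<le> g n"
  shows "\<exists>L. f \<longlonglongrightarrow> L \<and> (\<forall>n. \<bar>L - f n\<bar> \<le> (\<Sum>k. g (k + n))) \<and> (\<forall>n. \<bar>f n - f 0\<bar> \<le> suminf g)"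
proof -
  define h where "h k = f (Suc k) - f k" for k
  have g0: "\<And>n. 0 \<le> g n" using d by (meson abs_ge_zero order_trans)
  have sh: "summable h" by (rule summable_comparison_test[OF _ sg]) (auto simp: h_def d)
  have sah: "summable (\<lambda>k. \<bar>h k\<bar>)" by (rule summable_comparison_test[OF _ sg]) (auto simp: h_def d)
  have fn: "\<And>n. f n = f 0 + (\<Sum>k<n. h k)" using sum_lessThan_telescope[of f] by (simp add: h_def)
  have "(\<lambda>n. \<Sum>k<n. h k) \<longlonglongrightarrow> suminf h" by (rule summable_LIMSEQ[OF sh])
  hence "(\<lambda>n. f 0 + (\<Sum>k<n. h k)) \<longlonglongrightarrow> f 0 + suminf h" by (rule tendsto_add[OF tendsto_const])
  moreover have "f = (\<lambda>n. f 0 + (\<Sum>k<n. h k))" by (rule ext) (rule fn)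
  ultimately have lim: "f \<longlonglongrightarrow> f 0 + suminf h" by simp
  have tl: "\<bar>(f 0 + suminf h) - f n\<bar> \<le> (\<Sum>k. g (k + n))" for n
  proof -
    have "(f 0 + suminf h) - f n = (\<Sum>k. h (k + n))"
      using suminf_minus_initial_segment[OF sh, of n] fn[of n] by simp
    moreover have s1: "summable (\<lambda>k. \<bar>h (k + n)\<bar>)" using sah summable_iff_shift[of "\<lambda>k. \<bar>h k\<bar>" n] by simp
    moreover have s2: "summable (\<lambda>k. g (k + n))" using sg summable_iff_shift[of g n] by simp
    moreover have "(\<Sum>k. \<bar>h (k + n)\<bar>) \<le> (\<Sum>k. g (k + n))"
      by (rule suminf_le[OF _ s1 s2]) (simp add: h_def d)
    ultimately show ?thesis using summable_rabs[OF s1] by linarith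
  qed
  have hd: "\<bar>f n - f 0\<bar> \<le> suminf g" for n
  proof -
    have "\<bar>f n - f 0\<bar> = \<bar>\<Sum>k<n. h k\<bar>" using fn[of n] by simp
    also have "\<dots> \<le> (\<Sum>k<n. \<bar>h k\<bar>)" by (rule sum_abs)
    also have "\<dots> \<le> (\<Sum>k<n. g k)" by (rule sum_mono) (simp add: h_def d)
    also have "\<dots> \<le> suminf g" by (rule sum_le_suminf[OF sg]) (auto simp: g0)
    finally show ?thesis .
  qed
  show ?thesis using lim tl hd by blast
qed

lemma tail_zero:
  fixes g :: "nat \<Rightarrow> real"
  assumes sg: "summable g"
  shows "(\<lambda>n. \<Sum>k. g (k + n)) \<longlonglongrightarrow> 0"
proof -
  have "(\<lambda>n. suminf g - (\<Sum>k<n. g k)) \<longlonglongrightarrow> suminf g - suminf g"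
    by (rule tendsto_diff[OF tendsto_const summable_LIMSEQ[OF sg]])
  thus ?thesis using suminf_minus_initial_segment[OF sg] by simp
qed

lemma dX_eq_imp:
  assumes "\<forall>j\<le>k. x j = y j" shows "dX x y \<le> (1/2)^Suc k"
proof (cases "x = y")
  case True thus ?thesis by (simp add: dX_def)
next
  case False
  then obtain n where n: "x n \<noteq> y n" by auto
  define L where "L = (LEAST n. x n \<noteq> y n)"
  have "x L \<noteq> y L" unfolding L_def by (rule LeastI[of _ n]) (rule n)
  hence "Suc k \<le> L" using assms by (metis not_less_eq_eq)
  hence "((1::real)/2)^L \<le> (1/2)^Suc k" by (rule power_decreasing) auto
  thus ?thesis using False by (simp add: dX_def L_def)
qed

lemma dX_lt_imp:
  assumes "dX x y < (1/2)^k" "j \<le> k" shows "x j = y j"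
proof (cases "x = y")
  case True thus ?thesis by simp
next
  case False
  define L where "L = (LEAST n. x n \<noteq> y n)"
  have "((1::real)/2)^L < (1/2)^k" using assms(1) False by (simp add: dX_def L_def)
  hence "k < L"
  proof (rule contrapos_pp)
    assume "\<not> k < L"
    hence "L \<le> k" by simp
    hence "((1::real)/2)^k \<le> (1/2)^L" by (rule power_decreasing) auto
    thus "\<not> ((1::real)/2)^L < (1/2)^k" by simp
  qed
  hence "j < L" using assms(2) by simp
  thus ?thesis unfolding L_def using not_less_Least by blast
qed

lemma dX_nonneg: "0 \<le> dX x y" by (simp add: dX_def)
lemma dX_sym: "dX x y = dX y x"
  unfolding dX_def by (simp add: eq_commute)
lemma dX_zero: "dX x y = 0 \<longleftrightarrow> x = y" by (simp add: dX_def)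

lemma dX_ultra: "dX x z \<le> max (dX x y) (dX y z)"
proof (cases "x = z")
  case True
  hence "dX x z = 0" by (simp add: dX_def)
  thus ?thesis using dX_nonneg[of x y] by linarith
next
  case False
  then obtain n where n: "x n \<noteq> z n" by auto
  define m where "m = (LEAST n. x n \<noteq> z n)"
  have xm: "x m \<noteq> z m" unfolding m_def by (rule LeastI[of _ n]) (rule n)
  have dxz: "dX x z = (1/2)^m" using False by (simp add: dX_def m_def)
  show ?thesis
  proof (cases "x m \<noteq> y m")
    case True
    hence "(LEAST n. x n \<noteq> y n) \<le> m" by (rule Least_le)
    hence "((1::real)/2)^m \<le> (1/2)^(LEAST n. x n \<noteq> y n)" by (rule power_decreasing) auto
    moreover have "x \<noteq> y" using True by auto
    hence "dX x y = (1/2)^(LEAST n. x n \<noteq> y n)" by (simp add: dX_def)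
    ultimately have "dX x z \<le> dX x y" using dxz by simp
    thus ?thesis by simp
  next
    case False
    hence ym: "y m \<noteq> z m" using xm by simp
    hence "(LEAST n. y n \<noteq> z n) \<le> m" by (rule Least_le)
    hence "((1::real)/2)^m \<le> (1/2)^(LEAST n. y n \<noteq> z n)" by (rule power_decreasing) auto
    moreover have "y \<noteq> z" using ym by auto
    hence "dX y z = (1/2)^(LEAST n. y n \<noteq> z n)" by (simp add: dX_def)
    ultimately have "dX x z \<le> dX y z" using dxz by simp
    thus ?thesis by simp
  qed
qed

lemma dX_triangle: "dX x z \<le> dX x y + dX y z"
  using dX_ultra[of x z y] dX_nonneg[of x y] dX_nonneg[of y z] by linarith

lemma Metric_dX: "Metric_space M dX"
  by (unfold_locales) (auto simp: dX_nonneg dX_sym dX_zero dX_triangle)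

lemma dF_nonneg: "0 \<le> dF p q" by (simp add: dF_def dX_nonneg)
lemma dF_sym: "dF p q = dF q p" by (simp add: dF_def dX_sym abs_minus_commute)
lemma dF_zero: "dF p q = 0 \<longleftrightarrow> p = q"
proof
  assume a: "dF p q = 0"
  have "dX (fst p) (fst q) = 0" using a dX_nonneg[of "fst p" "fst q"] unfolding dF_def by linarith
  moreover have "snd p = snd q" using a dX_nonneg[of "fst p" "fst q"] unfolding dF_def by linarith
  ultimately show "p = q" by (simp add: dX_zero prod_eq_iff)
qed (simp add: dF_def dX_def)
lemma dF_triangle: "dF p r \<le> dF p q + dF q r"
proof -
  have "dX (fst p) (fst r) \<le> dF p q + dF q r"
    using dX_triangle[of "fst p" "fst r" "fst q"] unfolding dF_def by linarith
  moreover have "\<bar>snd p - snd r\<bar> \<le> dF p q + dF q r"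
    unfolding dF_def by linarith
  ultimately show ?thesis by (simp add: dF_def)
qed

lemma Metric_dF: "Metric_space M dF"
  by (unfold_locales) (auto simp: dF_nonneg dF_sym dF_zero dF_triangle)

lemma dX_le_dF: "dX (fst p) (fst q) \<le> dF p q" by (simp add: dF_def)
lemma snd_le_dF: "\<bar>snd p - snd q\<bar> \<le> dF p q" by (simp add: dF_def)



lemma proj_Suc_front: "proj Psi n (Suc k) v = Psi n (proj Psi (Suc n) k v)"
  by (induction k arbitrary: v) (auto simp: add.commute add.left_commute)

lemma proj_add: "proj Psi n (a + b) v = proj Psi n a (proj Psi (n + a) b v)"
  by (induction b arbitrary: v) (auto simp: add.assoc)

lemma koenig:
  fixes S :: "nat \<Rightarrow> 'v set"
  assumes fin: "\<And>n. finite (S n)" and ne: "\<And>n. S n \<noteq> {}" and inc: "\<And>n. Psi n ` S (Suc n) \<subseteq> S n"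
  shows "\<exists>x. \<forall>n. x n \<in> S n \<and> x n = Psi n (x (Suc n))"
proof -
  define Q where "Q n k = proj Psi n k ` S (n + k)" for n k
  have Qdec: "Q n (Suc k) \<subseteq> Q n k" for n k
  proof
    fix v assume "v \<in> Q n (Suc k)"
    then obtain w where w: "w \<in> S (n + Suc k)" "v = proj Psi n (Suc k) w" by (auto simp: Q_def)
    have "Psi (n + k) w \<in> S (n + k)" using inc[of "n+k"] w(1) by auto
    thus "v \<in> Q n k" using w(2) by (auto simp: Q_def)
  qed
  have Qmono: "k \<le> k' \<Longrightarrow> Q n k' \<subseteq> Q n k" for n k k'
    by (induction k' rule: dec_induct) (use Qdec in blast)+
  have Qfin: "finite (Q n k)" for n k by (simp add: Q_def fin)
  have Qne: "Q n k \<noteq> {}" for n k by (simp add: Q_def ne)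
  have stab: "\<exists>K. \<forall>k\<ge>K. Q n k = Q n K" for n
  proof -
    define c where "c = (LEAST c. \<exists>k. card (Q n k) = c)"
    have "\<exists>k. card (Q n k) = c" unfolding c_def by (rule LeastI_ex) blast
    then obtain K where K: "card (Q n K) = c" by blast
    have "Q n k = Q n K" if "k \<ge> K" for k
    proof -
      have sub: "Q n k \<subseteq> Q n K" using Qmono that by blast
      have "c \<le> card (Q n k)" unfolding c_def by (rule Least_le) blast
      thus ?thesis using card_subset_eq[OF Qfin sub] sub K
        by (metis Qfin card_mono le_antisym)
    qed
    thus ?thesis by blast
  qed
  define R where "R n = (\<Inter>k. Q n k)" for n
  have R_eq: "\<exists>K. \<forall>k\<ge>K. R n = Q n k" for n
  proof -
    obtain K where K: "\<forall>k\<ge>K. Q n k = Q n K" using stab by blast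
    have "R n = Q n K"
    proof
      show "R n \<subseteq> Q n K" by (auto simp: R_def)
      show "Q n K \<subseteq> R n"
      proof (unfold R_def, rule INT_greatest)
        fix k show "Q n K \<subseteq> Q n k"
        proof (cases "k \<le> K")
          case True thus ?thesis using Qmono by blast
        next
          case False
          hence "K \<le> k" by simp
          hence "Q n k = Q n K" using K by blast
          thus ?thesis by simp
        qed
      qed
    qed
    hence "\<forall>k\<ge>K. R n = Q n k" using K by metis
    thus ?thesis by blast
  qed
  have Rne: "R n \<noteq> {}" for n using R_eq[of n] Qne by auto
  have RS: "R n \<subseteq> S n" for n
  proof
    fix v assume "v \<in> R n"
    hence "v \<in> Q n 0" by (simp add: R_def)
    thus "v \<in> S n" by (simp add: Q_def)
  qed
  have Rlift: "\<exists>u\<in>R (Suc n). Psi n u = v" if v: "v \<in> R n" for n v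
  proof -
    obtain K1 where K1: "\<forall>k\<ge>K1. R n = Q n k" using R_eq by blast
    obtain K2 where K2: "\<forall>k\<ge>K2. R (Suc n) = Q (Suc n) k" using R_eq by blast
    define K where "K = max K1 K2"
    have "R n = Q n (Suc K)" using K1[rule_format, of "Suc K"] K_def by simp
    hence "v \<in> Q n (Suc K)" using v by simp
    then obtain w where w: "w \<in> S (n + Suc K)" "v = proj Psi n (Suc K) w" by (auto simp: Q_def)
    have "proj Psi (Suc n) K w \<in> Q (Suc n) K" using w(1) by (auto simp: Q_def)
    moreover have "R (Suc n) = Q (Suc n) K" using K2[rule_format, of K] K_def by simp
    ultimately have "proj Psi (Suc n) K w \<in> R (Suc n)" by simp
    moreover have "Psi n (proj Psi (Suc n) K w) = v" using w(2) proj_Suc_front by metis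
    ultimately show ?thesis by blast
  qed
  define x where "x = rec_nat (SOME v. v \<in> R 0) (\<lambda>n v. SOME u. u \<in> R (Suc n) \<and> Psi n u = v)"
  have x0: "x 0 = (SOME v. v \<in> R 0)" by (simp add: x_def)
  have xS: "x (Suc n) = (SOME u. u \<in> R (Suc n) \<and> Psi n u = x n)" for n by (simp add: x_def)
  have xR: "x n \<in> R n" for n
  proof (induction n)
    case 0 thus ?case using Rne[of 0] x0 by (simp add: some_in_eq)
  next
    case (Suc n)
    from Rlift[OF Suc] have "\<exists>u. u \<in> R (Suc n) \<and> Psi n u = x n" by blast
    from someI_ex[OF this] show ?case using xS by simp
  qed
  have xP: "x n = Psi n (x (Suc n))" for n
  proof -
    from Rlift[OF xR[of n]] have "\<exists>u. u \<in> R (Suc n) \<and> Psi n u = x n" by blast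
    from someI_ex[OF this] show ?thesis using xS by simp
  qed
  show ?thesis using xR RS xP by blast
qed

locale fsys =
  fixes V :: "nat \<Rightarrow> 'v set" and E :: "nat \<Rightarrow> 'v \<Rightarrow> 'v \<Rightarrow> bool"
    and Psi :: "nat \<Rightarrow> 'v \<Rightarrow> 'v" and phiL phiU :: "nat \<Rightarrow> 'v \<Rightarrow> real"
  assumes F: "F_system V E Psi phiL phiU"
    and pos: "\<forall>n. \<forall>v\<in>V n. phiU n v > 0"
    and CG: "condition_Gamma E Psi phiU"
    and SC: "scissorhand V Psi phiL phiU"
begin

abbreviation "X \<equiv> Xsp V Psi"
abbreviation "H \<equiv> HX V E Psi"

lemma finV: "finite (V n)" using F[unfolded F_system_def, THEN conjunct1] by blast
lemma Ein: "E n u v \<Longrightarrow> u \<in> V n \<and> v \<in> V n" using F[unfolded F_system_def, THEN conjunct2, THEN conjunct1] by blast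
lemma outE: "v \<in> V n \<Longrightarrow> \<exists>w. E n v w" using F[unfolded F_system_def, THEN conjunct2, THEN conjunct2, THEN conjunct1] by blast
lemma inE: "v \<in> V n \<Longrightarrow> \<exists>w. E n w v" using F[unfolded F_system_def, THEN conjunct2, THEN conjunct2, THEN conjunct1] by blast
lemma PsiV: "Psi n ` V (Suc n) = V n" using F[unfolded F_system_def, THEN conjunct2, THEN conjunct2, THEN conjunct2, THEN conjunct1] by blast
lemma PsiE: "E (Suc n) u v \<Longrightarrow> E n (Psi n u) (Psi n v)" using F[unfolded F_system_def, THEN conjunct2, THEN conjunct2, THEN conjunct2, THEN conjunct2, THEN conjunct1] by blast
lemma cond2: "\<exists>n>m. \<forall>g\<in>V n. \<exists>w. proj Psi m (n - m) ` {g'. E n g g'} = {w}"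
  using F[unfolded F_system_def, THEN conjunct2, THEN conjunct2, THEN conjunct2, THEN conjunct2, THEN conjunct2, THEN conjunct2, THEN conjunct2, THEN conjunct1] by simp
lemma phi_bounds: "v \<in> V n \<Longrightarrow> 0 \<le> phiL n v \<and> phiL n v \<le> phiU n v \<and> phiU n v \<le> 1"
  using F[unfolded F_system_def, THEN conjunct2, THEN conjunct2, THEN conjunct2, THEN conjunct2, THEN conjunct2, THEN conjunct2, THEN conjunct2, THEN conjunct2, THEN conjunct1] by blast
lemma phi_mono: "v \<in> V (Suc n) \<Longrightarrow> phiU (Suc n) v \<le> phiU n (Psi n v) \<and> phiL (Suc n) v \<ge> phiL n (Psi n v)"
  using F[unfolded F_system_def, THEN conjunct2, THEN conjunct2, THEN conjunct2, THEN conjunct2, THEN conjunct2, THEN conjunct2, THEN conjunct2, THEN conjunct2, THEN conjunct2, THEN conjunct1] by simp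

lemma XD: "x \<in> X \<Longrightarrow> x n \<in> V n" "x \<in> X \<Longrightarrow> x n = Psi n (x (Suc n))"
  unfolding Xsp_def by blast+

lemma XP: "x \<in> X \<Longrightarrow> Psi n (x (Suc n)) = x n"
  using XD(2) by metis

lemma projV: "v \<in> V (n + k) \<Longrightarrow> proj Psi n k v \<in> V n"
proof (induction k arbitrary: v)
  case (Suc k)
  have "Psi (n + k) v \<in> V (n + k)" using PsiV[of "n+k"] Suc.prems by auto
  thus ?case using Suc.IH by simp
qed simp

lemma projE: "E (n + k) u v \<Longrightarrow> E n (proj Psi n k u) (proj Psi n k v)"
proof (induction k arbitrary: u v)
  case (Suc k)
  have "E (n + k) (Psi (n + k) u) (Psi (n + k) v)" using PsiE Suc.prems by simp
  thus ?case using Suc.IH by simp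
qed simp

lemma projX: "x \<in> X \<Longrightarrow> proj Psi n k (x (n + k)) = x n"
proof (induction k)
  case (Suc k)
  thus ?case using XP[OF Suc.prems, of "n+k"] by simp
qed simp

lemma projX': "x \<in> X \<Longrightarrow> j \<le> k \<Longrightarrow> proj Psi j (k - j) (x k) = x j"
  using projX[of x j "k - j"] by simp

lemma Xagree: "x \<in> X \<Longrightarrow> y \<in> X \<Longrightarrow> x k = y k \<Longrightarrow> j \<le> k \<Longrightarrow> x j = y j"
  using projX' by metis

lemma Xagree_dX: "x \<in> X \<Longrightarrow> y \<in> X \<Longrightarrow> x k = y k \<Longrightarrow> dX x y \<le> (1/2)^Suc k"
  by (rule dX_eq_imp) (use Xagree in blast)

definition N :: "nat \<Rightarrow> nat" where
  "N m = (SOME n. n > m \<and> (\<forall>g\<in>V n. \<exists>w. proj Psi m (n - m) ` {g'. E n g g'} = {w}))"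

lemma N_prop: "N m > m" "g \<in> V (N m) \<Longrightarrow> \<exists>w. proj Psi m (N m - m) ` {g'. E (N m) g g'} = {w}"
  using someI_ex[OF cond2[of m]] unfolding N_def[symmetric] by blast+

lemma succ_unique:
  assumes x: "x \<in> X" and e1: "E (N m) (x (N m)) g1" and e2: "E (N m) (x (N m)) g2"
  shows "proj Psi m (N m - m) g1 = proj Psi m (N m - m) g2"
proof -
  obtain w where w: "proj Psi m (N m - m) ` {g'. E (N m) (x (N m)) g'} = {w}"
    using N_prop(2)[OF XD(1)[OF x]] by blast
  have "proj Psi m (N m - m) g1 \<in> {w}" "proj Psi m (N m - m) g2 \<in> {w}"
    using e1 e2 w[symmetric] by auto
  thus ?thesis by simp
qed

lemma H_unique_aux:
  assumes x: "x \<in> X" and y: "y \<in> X" and z: "z \<in> X"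
    and ey: "\<forall>n. E n (x n) (y n)" and ez: "\<forall>n. E n (x n) (z n)"
  shows "y = z"
proof
  fix m
  have "y m = proj Psi m (N m - m) (y (N m))" using projX'[OF y, of m "N m"] N_prop(1)[of m] by simp
  also have "\<dots> = proj Psi m (N m - m) (z (N m))" using succ_unique[OF x] ey ez by blast
  also have "\<dots> = z m" using projX'[OF z, of m "N m"] N_prop(1)[of m] by simp
  finally show "y m = z m" .
qed

lemma H_exists:
  assumes x: "x \<in> X" shows "\<exists>y. y \<in> X \<and> (\<forall>n. E n (x n) (y n))"
proof -
  define g0 where "g0 m = (SOME g'. E (N m) (x (N m)) g')" for m
  have g0: "E (N m) (x (N m)) (g0 m)" for m
    unfolding g0_def by (rule someI_ex) (rule outE[OF XD(1)[OF x]])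
  define y where "y m = proj Psi m (N m - m) (g0 m)" for m
  have L: "proj Psi m (K - m) g' = y m" if K: "K \<ge> N m" and e: "E K (x K) g'" for m K g'
  proof -
    define g'' where "g'' = proj Psi (N m) (K - N m) g'"
    have "E (N m) (proj Psi (N m) (K - N m) (x K)) g''"
      using projE[of "N m" "K - N m" "x K" g'] e K by (simp add: g''_def)
    moreover have "proj Psi (N m) (K - N m) (x K) = x (N m)" using projX'[OF x K] .
    ultimately have e'': "E (N m) (x (N m)) g''" by simp
    have "proj Psi m (K - m) g' = proj Psi m (N m - m) g''"
      using proj_add[of Psi m "N m - m" "K - N m" g'] N_prop(1)[of m] K by (simp add: g''_def)
    also have "\<dots> = y m" unfolding y_def using succ_unique[OF x e'' g0] .
    finally show ?thesis .
  qed
  have yV: "y m \<in> V m" for m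
  proof -
    have "g0 m \<in> V (m + (N m - m))" using Ein[OF g0[of m]] N_prop(1)[of m] by simp
    thus ?thesis unfolding y_def by (rule projV)
  qed
  have yP: "y m = Psi m (y (Suc m))" for m
  proof -
    define K where "K = max (N m) (N (Suc m))"
    obtain g' where e: "E K (x K) g'" using outE[OF XD(1)[OF x]] by blast
    have "y m = proj Psi m (K - m) g'" using L[of m K g'] e K_def by simp
    also have "K - m = Suc (K - Suc m)" using N_prop(1)[of "Suc m"] K_def by simp
    hence "proj Psi m (K - m) g' = Psi m (proj Psi (Suc m) (K - Suc m) g')"
      using proj_Suc_front by metis
    also have "proj Psi (Suc m) (K - Suc m) g' = y (Suc m)" using L[of "Suc m" K g'] e K_def by simp
    finally show ?thesis .
  qed
  have yE: "E m (x m) (y m)" for m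
  proof -
    have "E m (proj Psi m (N m - m) (x (N m))) (proj Psi m (N m - m) (g0 m))"
      using projE[of m "N m - m" "x (N m)" "g0 m"] g0[of m] N_prop(1)[of m] by simp
    thus ?thesis using projX'[OF x, of m "N m"] N_prop(1)[of m] by (simp add: y_def)
  qed
  show ?thesis unfolding Xsp_def using yV yP yE by blast
qed

lemma H_props: assumes x: "x \<in> X" shows "H x \<in> X" "\<And>n. E n (x n) (H x n)"
proof -
  obtain y where y: "y \<in> X" "\<forall>n. E n (x n) (y n)" using H_exists[OF x] by blast
  have "H x = y" unfolding HX_def
    by (rule the_equality) (use y H_unique_aux[OF x] in blast)+
  thus "H x \<in> X" "\<And>n. E n (x n) (H x n)" using y by auto
qed

lemma H_unique: "x \<in> X \<Longrightarrow> y \<in> X \<Longrightarrow> \<forall>n. E n (x n) (y n) \<Longrightarrow> H x = y"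
  using H_unique_aux H_props by blast

lemma H_local: assumes x: "x \<in> X" and y: "y \<in> X" and eq: "x (N m) = y (N m)"
  shows "H x m = H y m"
proof -
  have "H x m = proj Psi m (N m - m) (H x (N m))"
    using projX'[OF H_props(1)[OF x], of m "N m"] N_prop(1)[of m] by simp
  also have "\<dots> = proj Psi m (N m - m) (H y (N m))"
    using succ_unique[OF x] H_props(2)[OF x] H_props(2)[OF y] eq by metis
  also have "\<dots> = H y m"
    using projX'[OF H_props(1)[OF y], of m "N m"] N_prop(1)[of m] by simp
  finally show ?thesis .
qed

lemma H_surj: assumes y: "y \<in> X" shows "\<exists>x\<in>X. H x = y"
proof -
  define S where "S n = {u \<in> V n. E n u (y n)}" for n
  have "\<exists>x. \<forall>n. x n \<in> S n \<and> x n = Psi n (x (Suc n))"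
  proof (rule koenig)
    show "finite (S n)" for n using finV by (simp add: S_def)
    show "S n \<noteq> {}" for n using inE[OF XD(1)[OF y]] Ein unfolding S_def by blast
    show "Psi n ` S (Suc n) \<subseteq> S n" for n
    proof
      fix v assume "v \<in> Psi n ` S (Suc n)"
      then obtain u where u: "u \<in> V (Suc n)" "E (Suc n) u (y (Suc n))" "v = Psi n u" by (auto simp: S_def)
      have "E n v (y n)" using PsiE[OF u(2)] u(3) XP[OF y] by simp
      thus "v \<in> S n" using Ein unfolding S_def by blast
    qed
  qed
  then obtain x where x: "\<forall>n. x n \<in> S n \<and> x n = Psi n (x (Suc n))" by blast
  have xS: "x n \<in> V n \<and> E n (x n) (y n)" for n using x unfolding S_def by blast
  have xX: "x \<in> X" unfolding Xsp_def using x xS by blast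
  have "H x = y" by (rule H_unique[OF xX y]) (use xS in blast)
  thus ?thesis using xX by blast
qed

end


context fsys begin

abbreviation "G \<equiv> Gamma E Psi phiU"
abbreviation "pU \<equiv> phi_lim phiU"
abbreviation "pL \<equiv> phi_lim phiL"
abbreviation "s \<equiv> s_fun V E Psi phiU"
abbreviation "Fn \<equiv> fence V Psi phiL phiU"

lemma Gamma_fin: "finite {Gamma_edge E Psi phiU n u v | u v. E n u v}"
proof -
  have "{Gamma_edge E Psi phiU n u v | u v. E n u v} = (\<lambda>(u,v). Gamma_edge E Psi phiU n u v) ` {(u,v). E n u v}"
    by auto
  moreover have "{(u,v). E n u v} \<subseteq> V n \<times> V n" using Ein by auto
  hence "finite {(u,v). E n u v}" using finV by (meson finite_SigmaI finite_subset)
  ultimately show ?thesis by simp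
qed

lemma Gamma_nonneg: "0 \<le> G n"
  unfolding Gamma_def by (rule Max_ge) (use Gamma_fin in auto)

lemma Gamma_bound:
  assumes e: "E (Suc n) u' v'"
  shows "\<bar>sn phiU n (Psi n v') (Psi n u') - sn phiU (Suc n) v' u'\<bar> \<le> G n"
    and "\<bar>sn phiU n (Psi n u') (Psi n v') - sn phiU (Suc n) u' v'\<bar> \<le> G n"
proof -
  define u where "u = Psi n u'"
  define v where "v = Psi n v'"
  define f where "f = (\<lambda>(a,b). {\<bar>sn phiU n v u - sn phiU (Suc n) b a\<bar>, \<bar>sn phiU n u v - sn phiU (Suc n) a b\<bar>})"
  define P where "P = {(a,b). E (Suc n) a b \<and> Psi n a = u \<and> Psi n b = v}"
  have A: "\<Union>{{\<bar>sn phiU n v u - sn phiU (Suc n) v' u'\<bar>,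
        \<bar>sn phiU n u v - sn phiU (Suc n) u' v'\<bar>} | u' v'.
        E (Suc n) u' v' \<and> Psi n u' = u \<and> Psi n v' = v} = \<Union>(f ` P)"
    unfolding f_def P_def by auto
  have "P \<subseteq> V (Suc n) \<times> V (Suc n)" using Ein unfolding P_def by auto
  hence finP: "finite P" using finV by (meson finite_SigmaI finite_subset)
  have finA: "finite (\<Union>(f ` P))" using finP by (auto simp: f_def)
  have ge: "Gamma_edge E Psi phiU n u v = Max (insert 0 (\<Union>(f ` P)))"
    unfolding Gamma_edge_def A by simp
  have uvP: "(u', v') \<in> P" using e by (simp add: P_def u_def v_def)
  have eE: "E n u v" using PsiE[OF e] by (simp add: u_def v_def)
  have "Gamma_edge E Psi phiU n u v \<le> G n"
    unfolding Gamma_def by (rule Max_ge) (use Gamma_fin eE in auto)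
  moreover have "\<bar>sn phiU n v u - sn phiU (Suc n) v' u'\<bar> \<le> Gamma_edge E Psi phiU n u v"
    unfolding ge by (rule Max_ge) (use finA uvP in \<open>auto simp: f_def\<close>)
  moreover have "\<bar>sn phiU n u v - sn phiU (Suc n) u' v'\<bar> \<le> Gamma_edge E Psi phiU n u v"
    unfolding ge by (rule Max_ge) (use finA uvP in \<open>auto simp: f_def\<close>)
  ultimately show "\<bar>sn phiU n (Psi n v') (Psi n u') - sn phiU (Suc n) v' u'\<bar> \<le> G n"
    and "\<bar>sn phiU n (Psi n u') (Psi n v') - sn phiU (Suc n) u' v'\<bar> \<le> G n"
    by (auto simp: u_def v_def)
qed

lemma sumG: "summable G" "suminf G < 1" using CG unfolding condition_Gamma_def by auto

definition tl :: "nat \<Rightarrow> real" where "tl n = (\<Sum>k. G (k + n))"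

lemma tl_zero: "tl \<longlonglongrightarrow> 0" unfolding tl_def using tail_zero[OF sumG(1)] .

definition a :: "nat \<Rightarrow> (nat \<Rightarrow> 'v) \<Rightarrow> real" where "a n x = sn phiU n (x n) (H x n)"
definition b :: "nat \<Rightarrow> (nat \<Rightarrow> 'v) \<Rightarrow> real" where "b n x = sn phiU n (H x n) (x n)"

lemma ab_step: assumes x: "x \<in> X"
  shows "\<bar>a (Suc n) x - a n x\<bar> \<le> G n" "\<bar>b (Suc n) x - b n x\<bar> \<le> G n"
proof -
  have e: "E (Suc n) (x (Suc n)) (H x (Suc n))" using H_props(2)[OF x] .
  have p1: "Psi n (x (Suc n)) = x n" using XP[OF x] by simp
  have p2: "Psi n (H x (Suc n)) = H x n" using XP[OF H_props(1)[OF x]] by simp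
  show "\<bar>a (Suc n) x - a n x\<bar> \<le> G n" using Gamma_bound(2)[OF e] p1 p2
    by (simp add: a_def abs_minus_commute)
  show "\<bar>b (Suc n) x - b n x\<bar> \<le> G n" using Gamma_bound(1)[OF e] p1 p2
    by (simp add: b_def abs_minus_commute)
qed

lemma s_conv: assumes x: "x \<in> X"
  shows "(\<lambda>n. a n x) \<longlonglongrightarrow> s x" "\<And>n. \<bar>s x - a n x\<bar> \<le> tl n" "\<And>n. \<bar>a n x - a 0 x\<bar> \<le> suminf G"
proof -
  obtain L where L: "(\<lambda>n. a n x) \<longlonglongrightarrow> L" "\<forall>n. \<bar>L - a n x\<bar> \<le> tl n" "\<forall>n. \<bar>a n x - a 0 x\<bar> \<le> suminf G"
    using tail_conv[OF sumG(1), of "\<lambda>n. a n x"] ab_step[OF x] unfolding tl_def by blast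
  have "s x = L" unfolding s_fun_def using L(1) limI unfolding a_def by blast
  thus "(\<lambda>n. a n x) \<longlonglongrightarrow> s x" "\<And>n. \<bar>s x - a n x\<bar> \<le> tl n" "\<And>n. \<bar>a n x - a 0 x\<bar> \<le> suminf G"
    using L by auto
qed

lemma b_bound: assumes x: "x \<in> X" shows "\<bar>b n x - b 0 x\<bar> \<le> suminf G"
  using tail_conv[OF sumG(1), of "\<lambda>n. b n x"] ab_step[OF x] by blast

definition c0 :: real where "c0 = Min (insert 1 (phiU 0 ` V 0))"

lemma c0: "0 < c0" "v \<in> V 0 \<Longrightarrow> c0 \<le> phiU 0 v"
proof -
  show "0 < c0" unfolding c0_def using finV[of 0] pos by (subst Min_gr_iff) auto
  show "v \<in> V 0 \<Longrightarrow> c0 \<le> phiU 0 v" unfolding c0_def using finV[of 0] by (intro Min_le) auto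
qed

definition Ms :: real where "Ms = 1 / c0 + 1"

lemma Ms_pos: "0 < Ms"
proof -
  have "0 < 1 / c0" using c0(1) by simp
  thus ?thesis unfolding Ms_def by linarith
qed

lemma ratio0: assumes u: "u \<in> V 0" and v: "v \<in> V 0" shows "sn phiU 0 u v \<le> 1 / c0"
proof -
  have "phiU 0 v \<le> 1" using phi_bounds[OF v] by simp
  moreover have "c0 \<le> phiU 0 u" using c0(2)[OF u] .
  ultimately show ?thesis unfolding sn_def using c0(1) pos u
    by (meson frac_le zero_le_one)
qed

lemma a_bounds: assumes x: "x \<in> X"
  shows "a n x \<le> Ms" "b n x \<le> Ms" "0 < a n x" "0 < b n x" "a n x = 1 / b n x" "1 / Ms \<le> a n x"
proof -
  have x0: "x 0 \<in> V 0" and h0: "H x 0 \<in> V 0" using XD(1)[OF x] XD(1)[OF H_props(1)[OF x]] by auto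
  have "a 0 x \<le> 1/c0" unfolding a_def by (rule ratio0[OF x0 h0])
  thus "a n x \<le> Ms" using s_conv(3)[OF x, of n] sumG(2) unfolding Ms_def by linarith
  have "b 0 x \<le> 1/c0" unfolding b_def by (rule ratio0[OF h0 x0])
  thus bM: "b n x \<le> Ms" using b_bound[OF x, of n] sumG(2) unfolding Ms_def by linarith
  have p1: "phiU n (x n) > 0" and p2: "phiU n (H x n) > 0"
    using pos XD(1)[OF x] XD(1)[OF H_props(1)[OF x]] by auto
  show "0 < a n x" "0 < b n x" using p1 p2 by (auto simp: a_def b_def sn_def)
  show ab: "a n x = 1 / b n x" by (simp add: a_def b_def sn_def)
  show "1 / Ms \<le> a n x" unfolding ab using bM \<open>0 < b n x\<close> by (simp add: frac_le)
qed

lemma s_bounds: assumes x: "x \<in> X" shows "s x \<le> Ms" "1 / Ms \<le> s x" "0 < s x"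
proof -
  show "s x \<le> Ms" by (rule LIMSEQ_le_const2[OF s_conv(1)[OF x]]) (use a_bounds(1)[OF x] in auto)
  show l: "1 / Ms \<le> s x" by (rule LIMSEQ_le_const[OF s_conv(1)[OF x]]) (use a_bounds(6)[OF x] in auto)
  show "0 < s x" using l Ms_pos by (meson less_le_trans zero_less_divide_1_iff)
qed

lemma pU_props: assumes x: "x \<in> X"
  shows "(\<lambda>n. phiU n (x n)) \<longlonglongrightarrow> pU x" "\<And>n. pU x \<le> phiU n (x n)" "0 \<le> pU x"
proof -
  have dec: "decseq (\<lambda>n. phiU n (x n))"
  proof (rule decseq_SucI)
    fix n show "phiU (Suc n) (x (Suc n)) \<le> phiU n (x n)"
      using phi_mono[OF XD(1)[OF x, of "Suc n"]] XP[OF x, of n] by simp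
  qed
  have lb: "\<forall>i. 0 \<le> phiU i (x i)" using phi_bounds XD(1)[OF x] by (meson order_trans)
  obtain L where L: "(\<lambda>n. phiU n (x n)) \<longlonglongrightarrow> L" "\<forall>i. L \<le> phiU i (x i)"
    using decseq_convergent[OF dec lb] by blast
  have "pU x = L" unfolding phi_lim_def using L(1) limI by blast
  thus "(\<lambda>n. phiU n (x n)) \<longlonglongrightarrow> pU x" "\<And>n. pU x \<le> phiU n (x n)" using L by auto
  show "0 \<le> pU x" by (rule LIMSEQ_le_const[OF \<open>(\<lambda>n. phiU n (x n)) \<longlonglongrightarrow> pU x\<close>]) (use lb in auto)
qed

lemma pL_props: assumes x: "x \<in> X"
  shows "(\<lambda>n. phiL n (x n)) \<longlonglongrightarrow> pL x" "\<And>n. phiL n (x n) \<le> pL x" "pL x \<le> pU x" "pU x \<le> 1" "0 \<le> pL x"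
proof -
  have inc: "incseq (\<lambda>n. phiL n (x n))"
  proof (rule incseq_SucI)
    fix n show "phiL n (x n) \<le> phiL (Suc n) (x (Suc n))"
      using phi_mono[OF XD(1)[OF x, of "Suc n"]] XP[OF x, of n] by simp
  qed
  have ub: "\<forall>i. phiL i (x i) \<le> 1" using phi_bounds XD(1)[OF x] by (meson order_trans)
  obtain L where L: "(\<lambda>n. phiL n (x n)) \<longlonglongrightarrow> L" "\<forall>i. phiL i (x i) \<le> L"
    using incseq_convergent[OF inc ub] by blast
  have "pL x = L" unfolding phi_lim_def using L(1) limI by blast
  thus c1: "(\<lambda>n. phiL n (x n)) \<longlonglongrightarrow> pL x" and "\<And>n. phiL n (x n) \<le> pL x" using L by auto
  show "pL x \<le> pU x"
    by (rule LIMSEQ_le[OF c1 pU_props(1)[OF x]]) (use phi_bounds XD(1)[OF x] in auto)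
  show "pU x \<le> 1"
    by (rule LIMSEQ_le_const2[OF pU_props(1)[OF x]]) (use phi_bounds XD(1)[OF x] in auto)
  show "0 \<le> pL x"
    by (rule LIMSEQ_le_const[OF c1]) (use phi_bounds XD(1)[OF x] in auto)
qed

lemma pU_H: assumes x: "x \<in> X" shows "pU (H x) = s x * pU x"
proof -
  have eq: "phiU n (H x n) = a n x * phiU n (x n)" for n
  proof -
    have "phiU n (x n) \<noteq> 0" using pos XD(1)[OF x, of n] by fastforce
    thus ?thesis by (simp add: a_def sn_def)
  qed
  have "(\<lambda>n. a n x * phiU n (x n)) \<longlonglongrightarrow> s x * pU x"
    by (rule tendsto_mult[OF s_conv(1)[OF x] pU_props(1)[OF x]])
  hence "(\<lambda>n. phiU n (H x n)) \<longlonglongrightarrow> s x * pU x" using eq by simp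
  moreover have "(\<lambda>n. phiU n (H x n)) \<longlonglongrightarrow> pU (H x)" using pU_props(1)[OF H_props(1)[OF x]] .
  ultimately show ?thesis using LIMSEQ_unique by blast
qed

lemma pU_local: "x \<in> X \<Longrightarrow> y \<in> X \<Longrightarrow> x n = y n \<Longrightarrow> pU y \<le> phiU n (x n)"
  using pU_props(2) by metis
lemma pL_local: "x \<in> X \<Longrightarrow> y \<in> X \<Longrightarrow> x n = y n \<Longrightarrow> phiL n (x n) \<le> pL y"
  using pL_props(2) by metis

lemma fence_iff: "(x, t) \<in> Fn \<longleftrightarrow> x \<in> X \<and> pL x \<le> t \<and> t \<le> pU x"
  by (simp add: fence_def)

lemma fence_D: "p \<in> Fn \<Longrightarrow> fst p \<in> X \<and> 0 \<le> snd p \<and> snd p \<le> 1"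
proof -
  assume p: "p \<in> Fn"
  obtain x t where pxt: "p = (x, t)" by (cases p)
  have x: "x \<in> X" and t: "pL x \<le> t" "t \<le> pU x" using p pxt by (auto simp: fence_def)
  have "0 \<le> pL x" "pU x \<le> 1" using pL_props(4,5)[OF x] by auto
  thus ?thesis using x t pxt by simp
qed

lemma graph_in: "x \<in> X \<Longrightarrow> (x, pU x) \<in> Fn"
  using pL_props(3) by (simp add: fence_def)

end


context fsys begin

definition T :: "(nat \<Rightarrow> 'v) \<times> real \<Rightarrow> (nat \<Rightarrow> 'v) \<times> real" where
  "T p = (H (fst p), s (fst p) * snd p)"

lemma T_graph: "x \<in> X \<Longrightarrow> T (x, pU x) = (H x, pU (H x))"
  by (simp add: T_def pU_H)

lemma s_local: assumes x: "x \<in> X" and y: "y \<in> X" and eq: "x (N n) = y (N n)"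
  shows "\<bar>s x - s y\<bar> \<le> 2 * tl n"
proof -
  have "x n = y n" using Xagree[OF x y eq] N_prop(1)[of n] by simp
  moreover have "H x n = H y n" using H_local[OF x y eq] .
  ultimately have "a n x = a n y" by (simp add: a_def)
  thus ?thesis using s_conv(2)[OF x, of n] s_conv(2)[OF y, of n] by linarith
qed

lemma T_cont: assumes p: "p \<in> Fn" and e: "0 < \<epsilon>"
  shows "\<exists>\<delta>>0. \<forall>q\<in>Fn. dF p q < \<delta> \<longrightarrow> dF (T p) (T q) < \<epsilon>"
proof -
  obtain m where m: "(1/2::real)^m < \<epsilon>" using real_arch_pow_inv[OF e, of "1/2"] by auto
  have e4: "0 < \<epsilon>/4" using e by simp
  have "\<forall>\<^sub>F n in sequentially. tl n < \<epsilon>/4" using order_tendstoD(2)[OF tl_zero e4] .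
  then obtain n where n: "tl n < \<epsilon>/4" using eventually_sequentially by auto
  define K where "K = max (N m) (N n)"
  define \<delta> where "\<delta> = min ((1/2)^K) (\<epsilon> / (2 * Ms))"
  have dpos: "0 < \<delta>" using e Ms_pos by (simp add: \<delta>_def)
  have "dF (T p) (T q) < \<epsilon>" if q: "q \<in> Fn" and d: "dF p q < \<delta>" for q
  proof -
    obtain x t where pxt: "p = (x, t)" by (cases p)
    obtain y u where qyu: "q = (y, u)" by (cases q)
    have x: "x \<in> X" and t: "0 \<le> t" "t \<le> 1" using fence_D[OF p] pxt by auto
    have y: "y \<in> X" using fence_D[OF q] qyu by auto
    have dxy: "dX x y < (1/2)^K" using d dX_le_dF[of p q] pxt qyu by (simp add: \<delta>_def)
    have dtu: "\<bar>t - u\<bar> < \<epsilon> / (2 * Ms)" using d snd_le_dF[of p q] pxt qyu by (simp add: \<delta>_def)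
    have "x (N m) = y (N m)" by (rule dX_lt_imp[OF dxy]) (simp add: K_def)
    hence "H x m = H y m" by (rule H_local[OF x y])
    hence "dX (H x) (H y) \<le> (1/2)^Suc m" by (rule Xagree_dX[OF H_props(1)[OF x] H_props(1)[OF y]])
    moreover have "(1/2::real)^Suc m \<le> (1/2)^m" by (rule power_decreasing) auto
    ultimately have c1: "dX (H x) (H y) < \<epsilon>" using m by linarith
    have "x (N n) = y (N n)" by (rule dX_lt_imp[OF dxy]) (simp add: K_def)
    hence ss: "\<bar>s x - s y\<bar> < \<epsilon>/2" using s_local[OF x y] n by fastforce
    have "s x * t - s y * u = (s x - s y) * t + s y * (t - u)" by (simp add: algebra_simps)
    hence "\<bar>s x * t - s y * u\<bar> \<le> \<bar>s x - s y\<bar> * t + s y * \<bar>t - u\<bar>"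
    proof -
    have "\<bar>(s x - s y) * t + s y * (t - u)\<bar> \<le> \<bar>(s x - s y) * t\<bar> + \<bar>s y * (t - u)\<bar>"
      by (rule abs_triangle_ineq)
    moreover have "\<bar>(s x - s y) * t\<bar> = \<bar>s x - s y\<bar> * t" using t by (simp add: abs_mult)
    moreover have "\<bar>s y * (t - u)\<bar> = s y * \<bar>t - u\<bar>" using s_bounds(3)[OF y] by (simp add: abs_mult)
    ultimately show ?thesis using \<open>s x * t - s y * u = (s x - s y) * t + s y * (t - u)\<close> by simp
  qed
    also have "\<bar>s x - s y\<bar> * t \<le> \<bar>s x - s y\<bar>" using t by (simp add: mult_left_le)
    also have "s y * \<bar>t - u\<bar> \<le> Ms * \<bar>t - u\<bar>" using s_bounds(1)[OF y] by (simp add: mult_right_mono)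
    also have "Ms * \<bar>t - u\<bar> < Ms * (\<epsilon> / (2 * Ms))" by (rule mult_strict_left_mono[OF dtu Ms_pos])
    also have "Ms * (\<epsilon> / (2 * Ms)) = \<epsilon>/2" using Ms_pos by simp
    finally have c2: "\<bar>s x * t - s y * u\<bar> < \<epsilon>" using ss by linarith
    show ?thesis using c1 c2 pxt qyu by (simp add: dF_def T_def)
  qed
  thus ?thesis using dpos by blast
qed

lemma fence_closed:
  assumes x: "x \<in> X" and cl: "\<And>\<epsilon>. 0 < \<epsilon> \<Longrightarrow> \<exists>q\<in>Fn. dF (x, t) q < \<epsilon>"
  shows "(x, t) \<in> Fn"
proof -
  have up: "t \<le> phiU n (x n)" for n
  proof (rule ccontr)
    assume "\<not> t \<le> phiU n (x n)"
    hence dp: "0 < t - phiU n (x n)" by simp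
    obtain q where q: "q \<in> Fn" "dF (x, t) q < min ((1/2)^n) (t - phiU n (x n))"
      using cl[of "min ((1/2)^n) (t - phiU n (x n))"] dp by auto
    obtain y u where qyu: "q = (y, u)" by (cases q)
    have y: "y \<in> X" "u \<le> pU y" using q(1) qyu by (auto simp: fence_def)
    have "dX x y < (1/2)^n" using q(2) dX_le_dF[of "(x,t)" q] qyu by simp
    hence "x n = y n" using dX_lt_imp by blast
    hence "u \<le> phiU n (x n)" using pU_local[OF x y(1)] y(2) by fastforce
    moreover have "\<bar>t - u\<bar> < t - phiU n (x n)" using q(2) snd_le_dF[of "(x,t)" q] qyu by simp
    ultimately show False by linarith
  qed
  have lo: "phiL n (x n) \<le> t" for n
  proof (rule ccontr)
    assume "\<not> phiL n (x n) \<le> t"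
    hence dp: "0 < phiL n (x n) - t" by simp
    obtain q where q: "q \<in> Fn" "dF (x, t) q < min ((1/2)^n) (phiL n (x n) - t)"
      using cl[of "min ((1/2)^n) (phiL n (x n) - t)"] dp by auto
    obtain y u where qyu: "q = (y, u)" by (cases q)
    have y: "y \<in> X" "pL y \<le> u" using q(1) qyu by (auto simp: fence_def)
    have "dX x y < (1/2)^n" using q(2) dX_le_dF[of "(x,t)" q] qyu by simp
    hence "x n = y n" using dX_lt_imp by blast
    hence "phiL n (x n) \<le> u" using pL_local[OF x y(1)] y(2) by fastforce
    moreover have "\<bar>t - u\<bar> < phiL n (x n) - t" using q(2) snd_le_dF[of "(x,t)" q] qyu by simp
    ultimately show False by linarith
  qed
  have "t \<le> pU x" by (rule LIMSEQ_le_const[OF pU_props(1)[OF x]]) (use up in auto)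
  moreover have "pL x \<le> t" by (rule LIMSEQ_le_const2[OF pL_props(1)[OF x]]) (use lo in auto)
  ultimately show ?thesis using x by (simp add: fence_def)
qed

lemma dense_graph: "p \<in> Fn \<Longrightarrow> 0 < \<epsilon> \<Longrightarrow> \<exists>x\<in>X. dF p (x, pU x) < \<epsilon>"
  using SC unfolding scissorhand_def by blast

lemma T_in: assumes p: "p \<in> Fn" shows "T p \<in> Fn"
proof -
  obtain x t where pxt: "p = (x, t)" by (cases p)
  have x: "x \<in> X" using fence_D[OF p] pxt by simp
  have "T p = (H x, s x * t)" by (simp add: T_def pxt)
  moreover have "(H x, s x * t) \<in> Fn"
  proof (rule fence_closed[OF H_props(1)[OF x]])
    fix \<epsilon> :: real assume e: "0 < \<epsilon>"
    obtain \<delta> where d: "\<delta> > 0" "\<forall>q\<in>Fn. dF p q < \<delta> \<longrightarrow> dF (T p) (T q) < \<epsilon>" using T_cont[OF p e] by blast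
    obtain x' where x': "x' \<in> X" "dF p (x', pU x') < \<delta>" using dense_graph[OF p d(1)] by blast
    have "dF (T p) (T (x', pU x')) < \<epsilon>" using d(2) x' graph_in by blast
    moreover have "T (x', pU x') \<in> Fn" using T_graph[OF x'(1)] graph_in[OF H_props(1)[OF x'(1)]] by simp
    ultimately show "\<exists>q\<in>Fn. dF (H x, s x * t) q < \<epsilon>" using \<open>T p = (H x, s x * t)\<close> pxt by metis
  qed
  ultimately show ?thesis by simp
qed

lemma MF: "Metric_space Fn dF" by (rule Metric_dF)
lemma MX: "Metric_space X dX" by (rule Metric_dX)

lemma T_continuous: "continuous_map (Metric_space.mtopology Fn dF) (Metric_space.mtopology Fn dF) T"
  unfolding Metric_space.metric_continuous_map[OF MF MF]
proof (intro conjI ballI allI impI)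
  show "T ` Fn \<subseteq> Fn" using T_in by blast
  fix a and \<epsilon> :: real assume a: "a \<in> Fn" and e: "0 < \<epsilon>"
  obtain \<delta> where d: "\<delta> > 0" "\<forall>q\<in>Fn. dF a q < \<delta> \<longrightarrow> dF (T a) (T q) < \<epsilon>"
    using T_cont[OF a e] by blast
  show "\<exists>\<delta>>0. \<forall>x. x \<in> Fn \<and> dF a x < \<delta> \<longrightarrow> dF (T a) (T x) < \<epsilon>"
  proof (intro exI conjI allI impI)
    show "0 < \<delta>" by (rule d(1))
    fix x assume "x \<in> Fn \<and> dF a x < \<delta>"
    thus "dF (T a) (T x) < \<epsilon>" using d(2) by blast
  qed
qed

end


context fsys begin

lemma fence_seq_compact:
  fixes \<sigma> :: "nat \<Rightarrow> (nat \<Rightarrow> 'v) \<times> real"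
  assumes sig: "\<And>k. \<sigma> k \<in> Fn"
  shows "\<exists>l r. l \<in> Fn \<and> strict_mono r \<and> (\<forall>\<epsilon>>0. \<forall>\<^sub>F j in sequentially. dF (\<sigma> (r j)) l < \<epsilon>)"
proof -
  define xs where "xs k = fst (\<sigma> k)" for k
  define ts where "ts k = snd (\<sigma> k)" for k
  have xsX: "xs k \<in> X" for k using fence_D[OF sig[of k]] by (simp add: xs_def)
  have ts01: "ts k \<in> {0..1}" for k using fence_D[OF sig[of k]] by (simp add: ts_def)
  define S where "S n = {v \<in> V n. infinite {k. xs k n = v}}" for n
  have "\<exists>y. \<forall>n. y n \<in> S n \<and> y n = Psi n (y (Suc n))"
  proof (rule koenig)
    show "finite (S n)" for n using finV by (simp add: S_def)
    show "S n \<noteq> {}" for n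
    proof
      assume emp: "S n = {}"
      have "(UNIV::nat set) = (\<Union>v\<in>V n. {k. xs k n = v})" using XD(1)[OF xsX] by auto
      moreover have "finite (\<Union>v\<in>V n. {k. xs k n = v})"
        using emp finV[of n] by (auto simp: S_def)
      ultimately show False by simp
    qed
    show "Psi n ` S (Suc n) \<subseteq> S n" for n
    proof
      fix w assume "w \<in> Psi n ` S (Suc n)"
      then obtain v where v: "v \<in> S (Suc n)" "w = Psi n v" by blast
      have "{k. xs k (Suc n) = v} \<subseteq> {k. xs k n = w}" using XP[OF xsX] v(2) by auto
      hence "infinite {k. xs k n = w}" using v(1) infinite_super by (auto simp: S_def)
      moreover have "w \<in> V n" using PsiV[of n] v by (auto simp: S_def)
      ultimately show "w \<in> S n" by (simp add: S_def)
    qed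
  qed
  then obtain y where y: "\<forall>n. y n \<in> S n \<and> y n = Psi n (y (Suc n))" by blast
  have yS: "y n \<in> V n \<and> infinite {k. xs k n = y n}" for n using y unfolding S_def by blast
  have yX: "y \<in> X" unfolding Xsp_def using y yS by blast
  have unb: "\<forall>m. \<exists>k>m. xs k n = y n" for n
    using yS[of n] infinite_nat_iff_unbounded[of "{k. xs k n = y n}"] by blast
  define r1 where "r1 = rec_nat (SOME k. xs k 0 = y 0) (\<lambda>j rj. SOME k. k > rj \<and> xs k (Suc j) = y (Suc j))"
  have r10: "r1 0 = (SOME k. xs k 0 = y 0)" by (simp add: r1_def)
  have r1S: "r1 (Suc j) = (SOME k. k > r1 j \<and> xs k (Suc j) = y (Suc j))" for j by (simp add: r1_def)
  have r1a: "xs (r1 0) 0 = y 0" unfolding r10 by (rule someI_ex) (use unb in blast)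
  have r1b: "r1 (Suc j) > r1 j \<and> xs (r1 (Suc j)) (Suc j) = y (Suc j)" for j
    unfolding r1S[of j] by (rule someI_ex) (use unb in blast)
  have r1y: "xs (r1 j) j = y j" for j by (cases j) (use r1a r1b in auto)
  have smr1: "strict_mono r1" using r1b by (simp add: strict_mono_Suc_iff)
  have "seq_compact {0..1::real}" using compact_Icc compact_eq_seq_compact_metric by blast
  then obtain \<tau> r2 where tau: "\<tau> \<in> {0..1}" "strict_mono r2" "((ts \<circ> r1) \<circ> r2) \<longlonglongrightarrow> \<tau>"
    unfolding seq_compact_def using ts01 by (metis comp_apply)
  define r where "r = r1 \<circ> r2"
  have smr: "strict_mono r" unfolding r_def using smr1 tau(2) by (simp add: strict_mono_o)
  have dxr: "dX (xs (r j)) y \<le> (1/2)^j" for j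
  proof -
    have "xs (r j) (r2 j) = y (r2 j)" using r1y by (simp add: r_def)
    hence "dX (xs (r j)) y \<le> (1/2)^Suc (r2 j)" by (rule Xagree_dX[OF xsX yX])
    also have "(1/2::real)^Suc (r2 j) \<le> (1/2)^j"
      by (rule power_decreasing) (use seq_suble[OF tau(2), of j] in auto)
    finally show ?thesis .
  qed
  have conv: "\<forall>\<^sub>F j in sequentially. dF (\<sigma> (r j)) (y, \<tau>) < \<epsilon>" if e: "0 < \<epsilon>" for \<epsilon>
  proof -
    have "\<forall>\<^sub>F j in sequentially. (1/2::real)^j < \<epsilon>"
      using order_tendstoD(2)[OF LIMSEQ_realpow_zero[of "1/2::real"]] e by simp
    moreover have "\<forall>\<^sub>F j in sequentially. dist (((ts \<circ> r1) \<circ> r2) j) \<tau> < \<epsilon>"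
      using tendstoD[OF tau(3) e] .
    ultimately show ?thesis
    proof eventually_elim
      case (elim j)
      have "dX (xs (r j)) y < \<epsilon>" using dxr[of j] elim(1) by linarith
      moreover have "\<bar>ts (r j) - \<tau>\<bar> < \<epsilon>" using elim(2) by (simp add: r_def dist_real_def)
      ultimately show ?case by (simp add: dF_def xs_def ts_def)
    qed
  qed
  have lF: "(y, \<tau>) \<in> Fn"
  proof (rule fence_closed[OF yX])
    fix \<epsilon> :: real assume "0 < \<epsilon>"
    hence "\<forall>\<^sub>F j in sequentially. dF (\<sigma> (r j)) (y, \<tau>) < \<epsilon>" by (rule conv)
    then obtain N0 where "\<forall>j\<ge>N0. dF (\<sigma> (r j)) (y, \<tau>) < \<epsilon>" unfolding eventually_sequentially by blast
    hence "dF (\<sigma> (r N0)) (y, \<tau>) < \<epsilon>" by simp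
    hence "dF (y, \<tau>) (\<sigma> (r N0)) < \<epsilon>" using dF_sym[of "(y, \<tau>)" "\<sigma> (r N0)"] by linarith
    thus "\<exists>q\<in>Fn. dF (y, \<tau>) q < \<epsilon>" using sig by blast
  qed
  show ?thesis using lF smr conv by blast
qed

lemma fence_compact: "compact_space (Metric_space.mtopology Fn dF)"
  unfolding Metric_space.compact_space_sequentially[OF MF]
proof (intro allI impI)
  fix \<sigma> :: "nat \<Rightarrow> (nat \<Rightarrow> 'v) \<times> real" assume "range \<sigma> \<subseteq> Fn"
  hence sig: "\<And>k. \<sigma> k \<in> Fn" by auto
  obtain l r where lr: "l \<in> Fn" "strict_mono r" "\<forall>\<epsilon>>0. \<forall>\<^sub>F j in sequentially. dF (\<sigma> (r j)) l < \<epsilon>"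
    using fence_seq_compact[of \<sigma>, OF sig] by (elim exE conjE) (rule that, assumption+)
  have "limitin (Metric_space.mtopology Fn dF) (\<sigma> \<circ> r) l sequentially"
    unfolding Metric_space.limitin_metric[OF MF]
  proof (intro conjI allI impI)
    show "l \<in> Fn" by (rule lr(1))
    fix \<epsilon> :: real assume e: "0 < \<epsilon>"
    have "\<forall>\<^sub>F j in sequentially. dF (\<sigma> (r j)) l < \<epsilon>" using lr(3) e by blast
    thus "\<forall>\<^sub>F j in sequentially. (\<sigma> \<circ> r) j \<in> Fn \<and> dF ((\<sigma> \<circ> r) j) l < \<epsilon>"
      by (rule eventually_mono) (simp add: sig)
  qed
  thus "\<exists>l r. l \<in> Fn \<and> strict_mono r \<and> limitin (Metric_space.mtopology Fn dF) (\<sigma> \<circ> r) l sequentially"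
    using lr by blast
qed

end


context fsys begin

lemma T_surj: "T ` Fn = Fn"
proof
  show "T ` Fn \<subseteq> Fn" using T_in by blast
  have cpt: "compactin (Metric_space.mtopology Fn dF) (T ` Fn)"
    using image_compactin[OF fence_compact[unfolded compact_space_def] T_continuous]
    by (simp add: Metric_space.topspace_mtopology[OF MF])
  have cl: "closedin (Metric_space.mtopology Fn dF) (T ` Fn)"
    by (rule compactin_imp_closedin[OF Metric_space.Hausdorff_space_mtopology[OF MF] cpt])
  show "Fn \<subseteq> T ` Fn"
  proof
    fix p assume p: "p \<in> Fn"
    show "p \<in> T ` Fn"
    proof (rule ccontr)
      assume np: "p \<notin> T ` Fn"
      obtain r where r: "r > 0" "disjnt (T ` Fn) (Metric_space.mball Fn dF p r)"
        using cl np p unfolding Metric_space.closedin_metric[OF MF] by blast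
      obtain x where x: "x \<in> X" "dF p (x, pU x) < r" using dense_graph[OF p r(1)] by blast
      obtain x' where x': "x' \<in> X" "H x' = x" using H_surj[OF x(1)] by blast
      have "T (x', pU x') = (x, pU x)" using T_graph[OF x'(1)] x'(2) by simp
      hence "(x, pU x) \<in> T ` Fn" using graph_in[OF x'(1)] by (metis image_eqI)
      moreover have "(x, pU x) \<in> Metric_space.mball Fn dF p r"
        using Metric_space.in_mball[OF MF] p graph_in[OF x(1)] x(2) by blast
      ultimately show False using r(2) by (auto simp: disjnt_def)
    qed
  qed
qed

lemma T_unique:
  assumes cT: "continuous_map (Metric_space.mtopology Fn dF) (Metric_space.mtopology Fn dF) T'"
    and gr: "\<forall>x\<in>X. T' (x, pU x) = (H x, pU (H x))"
    and p: "p \<in> Fn"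
  shows "T' p = T p"
proof (rule ccontr)
  assume ne: "T' p \<noteq> T p"
  define \<epsilon> where "\<epsilon> = dF (T' p) (T p) / 2"
  have e: "0 < \<epsilon>" using ne dF_zero[of "T' p" "T p"] dF_nonneg[of "T' p" "T p"] by (simp add: \<epsilon>_def)
  have cc: "\<forall>a\<in>Fn. \<forall>\<epsilon>>0. \<exists>\<delta>>0. \<forall>x. x \<in> Fn \<and> dF a x < \<delta> \<longrightarrow> dF (T' a) (T' x) < \<epsilon>"
    using cT unfolding Metric_space.metric_continuous_map[OF MF MF] by blast
  obtain d1 where d1: "d1 > 0" "\<forall>x. x \<in> Fn \<and> dF p x < d1 \<longrightarrow> dF (T' p) (T' x) < \<epsilon>"
    using cc p e by blast
  obtain d2 where d2: "d2 > 0" "\<forall>q\<in>Fn. dF p q < d2 \<longrightarrow> dF (T p) (T q) < \<epsilon>"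
    using T_cont[OF p e] by blast
  obtain x where x: "x \<in> X" "dF p (x, pU x) < min d1 d2" using dense_graph[OF p] d1(1) d2(1) by (meson min_less_iff_conj)
  have q: "(x, pU x) \<in> Fn" using graph_in[OF x(1)] .
  have "T' (x, pU x) = T (x, pU x)" using gr x(1) T_graph[OF x(1)] by simp
  have a1: "dF (T' p) (T' (x, pU x)) < \<epsilon>" using d1(2) q x(2) by simp
  have a2: "dF (T p) (T (x, pU x)) < \<epsilon>" using d2(2) q x(2) by simp
  have "dF (T' p) (T p) \<le> dF (T' p) (T' (x, pU x)) + dF (T' (x, pU x)) (T p)" by (rule dF_triangle)
  also have "dF (T' (x, pU x)) (T p) = dF (T p) (T (x, pU x))"
    using \<open>T' (x, pU x) = T (x, pU x)\<close> dF_sym by metis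
  finally have "dF (T' p) (T p) < 2 * \<epsilon>" using a1 a2 by linarith
  thus False by (simp add: \<epsilon>_def)
qed

lemma T_homeo:
  assumes h: "homeomorphic_map (Metric_space.mtopology X dX) (Metric_space.mtopology X dX) H"
  shows "homeomorphic_map (Metric_space.mtopology Fn dF) (Metric_space.mtopology Fn dF) T"
proof -
  have injH: "inj_on H X" using homeomorphic_imp_injective_map[OF h]
    by (simp add: Metric_space.topspace_mtopology[OF MX])
  have injT: "inj_on T Fn"
  proof
    fix p q assume p: "p \<in> Fn" and q: "q \<in> Fn" and eq: "T p = T q"
    obtain x t where pxt: "p = (x, t)" by (cases p)
    obtain y u where qyu: "q = (y, u)" by (cases q)
    have x: "x \<in> X" and y: "y \<in> X" using fence_D p q pxt qyu by auto
    have "H x = H y" using eq pxt qyu by (simp add: T_def)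
    hence xy: "x = y" using injH x y by (meson inj_onD)
    have "s x * t = s x * u" using eq pxt qyu xy by (simp add: T_def)
    hence "t = u" using s_bounds(3)[OF x] by simp
    thus "p = q" using pxt qyu xy by simp
  qed
  show ?thesis
    by (rule continuous_imp_homeomorphic_map[OF T_continuous fence_compact
          Metric_space.Hausdorff_space_mtopology[OF MF]])
       (use T_surj injT in \<open>simp_all add: Metric_space.topspace_mtopology[OF MF]\<close>)
qed

lemma T_diff: assumes p: "(x, t) \<in> Fn" and q: "(y, u) \<in> Fn"
  shows "\<bar>s x * t - s y * u\<bar> \<le> \<bar>s x - s y\<bar> + Ms * \<bar>t - u\<bar>"
proof -
  have x: "x \<in> X" and t: "0 \<le> t" "t \<le> 1" using fence_D[OF p] by auto
  have y: "y \<in> X" using fence_D[OF q] by auto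
  have "s x * t - s y * u = (s x - s y) * t + s y * (t - u)" by (simp add: algebra_simps)
  hence "\<bar>s x * t - s y * u\<bar> \<le> \<bar>s x - s y\<bar> * t + s y * \<bar>t - u\<bar>"
  proof -
    have "\<bar>(s x - s y) * t + s y * (t - u)\<bar> \<le> \<bar>(s x - s y) * t\<bar> + \<bar>s y * (t - u)\<bar>"
      by (rule abs_triangle_ineq)
    moreover have "\<bar>(s x - s y) * t\<bar> = \<bar>s x - s y\<bar> * t" using t by (simp add: abs_mult)
    moreover have "\<bar>s y * (t - u)\<bar> = s y * \<bar>t - u\<bar>" using s_bounds(3)[OF y] by (simp add: abs_mult)
    ultimately show ?thesis using \<open>s x * t - s y * u = (s x - s y) * t + s y * (t - u)\<close> by simp
  qed
  also have "\<bar>s x - s y\<bar> * t \<le> \<bar>s x - s y\<bar>" using t by (simp add: mult_left_le)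
  also have "s y * \<bar>t - u\<bar> \<le> Ms * \<bar>t - u\<bar>" using s_bounds(1)[OF y] by (simp add: mult_right_mono)
  finally show ?thesis by simp
qed

lemma T_upper:
  assumes B1: "\<forall>x\<in>X. \<forall>y\<in>X. rdist (s x) (s y) \<le> B1 * dX x y"
    and B2: "\<forall>x\<in>X. \<forall>y\<in>X. dX (H x) (H y) \<le> B2 * dX x y"
    and p: "p \<in> Fn" and q: "q \<in> Fn"
  shows "dF (T p) (T q) \<le> (\<bar>B1\<bar> + \<bar>B2\<bar> + Ms) * dF p q"
proof -
  obtain x t where pxt: "p = (x, t)" by (cases p)
  obtain y u where qyu: "q = (y, u)" by (cases q)
  have x: "x \<in> X" and y: "y \<in> X" using fence_D p q pxt qyu by auto
  have d0: "0 \<le> dF p q" by (rule dF_nonneg)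
  have dx: "dX x y \<le> dF p q" using dX_le_dF[of p q] pxt qyu by simp
  have dt: "\<bar>t - u\<bar> \<le> dF p q" using snd_le_dF[of p q] pxt qyu by simp
  have dxn: "0 \<le> dX x y" by (rule dX_nonneg)
  have "dX (H x) (H y) \<le> B2 * dX x y" using B2 x y by blast
  also have "\<dots> \<le> \<bar>B2\<bar> * dX x y" using dxn by (simp add: mult_right_mono)
  also have "\<dots> \<le> \<bar>B2\<bar> * dF p q" using dx by (simp add: mult_left_mono)
  also have "\<dots> \<le> (\<bar>B1\<bar> + \<bar>B2\<bar> + Ms) * dF p q" using d0 Ms_pos by (simp add: mult_right_mono)
  finally have c1: "dX (H x) (H y) \<le> (\<bar>B1\<bar> + \<bar>B2\<bar> + Ms) * dF p q" .
  have "\<bar>s x - s y\<bar> \<le> B1 * dX x y" using B1 x y by (simp add: rdist_def)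
  also have "\<dots> \<le> \<bar>B1\<bar> * dX x y" using dxn by (simp add: mult_right_mono)
  also have "\<dots> \<le> \<bar>B1\<bar> * dF p q" using dx by (simp add: mult_left_mono)
  finally have "\<bar>s x - s y\<bar> \<le> \<bar>B1\<bar> * dF p q" .
  moreover have "Ms * \<bar>t - u\<bar> \<le> Ms * dF p q" using dt Ms_pos by simp
  ultimately have "\<bar>s x * t - s y * u\<bar> \<le> (\<bar>B1\<bar> + Ms) * dF p q"
    using T_diff[of x t y u] p q pxt qyu by (simp add: algebra_simps)
  also have "\<dots> \<le> (\<bar>B1\<bar> + \<bar>B2\<bar> + Ms) * dF p q" using d0 by (simp add: mult_right_mono)
  finally have c2: "\<bar>s x * t - s y * u\<bar> \<le> (\<bar>B1\<bar> + \<bar>B2\<bar> + Ms) * dF p q" .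
  show ?thesis using c1 c2 pxt qyu by (simp add: dF_def T_def)
qed

lemma T_lip:
  assumes "lipschitz_map X dX rdist s" "lipschitz_map X dX dX H"
  shows "lipschitz_map Fn dF dF T"
proof -
  obtain B1 where B1: "\<forall>x\<in>X. \<forall>y\<in>X. rdist (s x) (s y) \<le> B1 * dX x y"
    using assms(1) unfolding lipschitz_map_def by blast
  obtain B2 where B2: "\<forall>x\<in>X. \<forall>y\<in>X. dX (H x) (H y) \<le> B2 * dX x y"
    using assms(2) unfolding lipschitz_map_def by blast
  show ?thesis unfolding lipschitz_map_def using T_upper[OF B1 B2] by blast
qed

lemma T_lower:
  assumes A: "0 < A" and HA: "\<forall>x\<in>X. \<forall>y\<in>X. A * dX x y \<le> dX (H x) (H y)"
    and C: "\<forall>x\<in>X. \<forall>y\<in>X. rdist (1 / s x) (1 / s y) \<le> C * dX x y"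
    and p: "p \<in> Fn" and q: "q \<in> Fn"
  shows "dF p q \<le> (1/A + Ms + Ms * \<bar>C\<bar> / A) * dF (T p) (T q)"
proof -
  obtain x t where pxt: "p = (x, t)" by (cases p)
  obtain y u where qyu: "q = (y, u)" by (cases q)
  have x: "x \<in> X" and y: "y \<in> X" and u: "0 \<le> u" "u \<le> 1" using fence_D p q pxt qyu by auto
  define D where "D = dF (T p) (T q)"
  have D0: "0 \<le> D" by (simp add: D_def dF_nonneg)
  have DH: "dX (H x) (H y) \<le> D" using dX_le_dF[of "T p" "T q"] pxt qyu by (simp add: D_def T_def)
  have Ds: "\<bar>s x * t - s y * u\<bar> \<le> D" using snd_le_dF[of "T p" "T q"] pxt qyu by (simp add: D_def T_def)
  have "A * dX x y \<le> D" using HA x y DH by (meson order_trans)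
  hence dxD: "dX x y \<le> D / A" using A by (simp add: field_simps)
  have sx: "0 < s x" "1 / s x \<le> Ms" using s_bounds[OF x] Ms_pos
    by (auto simp: field_simps)
  have sy: "0 < s y" "s y \<le> Ms" using s_bounds[OF y] by auto
  have tu_eq: "t - u = (s x * t - s y * u) * (1 / s x) + (s y * u) * (1 / s x - 1 / s y)"
    using sx sy by (simp add: field_simps)
  have e1: "\<bar>t - u\<bar> \<le> \<bar>(s x * t - s y * u) * (1 / s x)\<bar> + \<bar>(s y * u) * (1 / s x - 1 / s y)\<bar>"
    by (subst tu_eq) (rule abs_triangle_ineq)
  have a1: "\<bar>1 / s x\<bar> = 1 / s x" using sx by simp
  have a2: "\<bar>s y * u\<bar> = s y * u" using sy u by simp
  have e2: "\<bar>(s x * t - s y * u) * (1 / s x)\<bar> = \<bar>s x * t - s y * u\<bar> * (1 / s x)"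
    by (simp only: abs_mult a1)
  have e3: "\<bar>(s y * u) * (1 / s x - 1 / s y)\<bar> = (s y * u) * \<bar>1 / s x - 1 / s y\<bar>"
    using abs_mult[of "s y * u" "1 / s x - 1 / s y"] a2 by metis
  have "\<bar>t - u\<bar> \<le> \<bar>s x * t - s y * u\<bar> * (1 / s x) + (s y * u) * \<bar>1 / s x - 1 / s y\<bar>"
    using e1 e2 e3 by linarith
  also have "\<bar>s x * t - s y * u\<bar> * (1 / s x) \<le> D * Ms"
    using Ds sx by (meson abs_ge_zero mult_mono less_imp_le zero_le_divide_1_iff order_trans D0)
  also have "(s y * u) * \<bar>1 / s x - 1 / s y\<bar> \<le> Ms * (\<bar>C\<bar> * (D / A))"
  proof (rule mult_mono)
    show "s y * u \<le> Ms" using sy u by (metis mult_left_le order_trans less_imp_le)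
    have "\<bar>1 / s x - 1 / s y\<bar> \<le> C * dX x y" using C x y by (simp add: rdist_def)
    also have "\<dots> \<le> \<bar>C\<bar> * dX x y" using dX_nonneg[of x y] by (simp add: mult_right_mono)
    also have "\<dots> \<le> \<bar>C\<bar> * (D / A)" by (rule mult_left_mono[OF dxD abs_ge_zero])
    finally show "\<bar>1 / s x - 1 / s y\<bar> \<le> \<bar>C\<bar> * (D / A)" .
    show "0 \<le> Ms" using Ms_pos by simp
    show "0 \<le> \<bar>1 / s x - 1 / s y\<bar>" by simp
  qed
  finally have tu: "\<bar>t - u\<bar> \<le> D * Ms + Ms * (\<bar>C\<bar> * (D / A))" by simp
  have K: "(1/A + Ms + Ms * \<bar>C\<bar> / A) * D = D / A + D * Ms + Ms * (\<bar>C\<bar> * (D / A))"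
    by (simp add: algebra_simps)
  have "0 \<le> D * Ms" "0 \<le> Ms * (\<bar>C\<bar> * (D / A))" "0 \<le> D / A" using D0 Ms_pos A by auto
  hence "dX x y \<le> (1/A + Ms + Ms * \<bar>C\<bar> / A) * D" "\<bar>t - u\<bar> \<le> (1/A + Ms + Ms * \<bar>C\<bar> / A) * D"
    using dxD tu K by linarith+
  thus ?thesis using pxt qyu by (simp add: dF_def D_def)
qed

lemma T_bilip:
  assumes "lipschitz_map X dX rdist s" "lipschitz_map X dX rdist (\<lambda>x. 1 / s x)"
    "bi_lipschitz_map X dX dX H"
  shows "bi_lipschitz_map Fn dF dF T"
proof -
  obtain B1 where B1: "\<forall>x\<in>X. \<forall>y\<in>X. rdist (s x) (s y) \<le> B1 * dX x y"
    using assms(1) unfolding lipschitz_map_def by blast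
  obtain C where C: "\<forall>x\<in>X. \<forall>y\<in>X. rdist (1 / s x) (1 / s y) \<le> C * dX x y"
    using assms(2) unfolding lipschitz_map_def by blast
  obtain A B2 where A: "0 < A" and AB: "\<forall>x\<in>X. \<forall>y\<in>X. A * dX x y \<le> dX (H x) (H y) \<and> dX (H x) (H y) \<le> B2 * dX x y"
    using assms(3) unfolding bi_lipschitz_map_def by blast
  have HA: "\<forall>x\<in>X. \<forall>y\<in>X. A * dX x y \<le> dX (H x) (H y)" using AB by blast
  have B2: "\<forall>x\<in>X. \<forall>y\<in>X. dX (H x) (H y) \<le> B2 * dX x y" using AB by blast
  define K where "K = 1/A + Ms + Ms * \<bar>C\<bar> / A"
  have Kpos: "0 < K" using A Ms_pos by (simp add: K_def add_pos_nonneg)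
  have "\<forall>p\<in>Fn. \<forall>q\<in>Fn. (1/K) * dF p q \<le> dF (T p) (T q) \<and> dF (T p) (T q) \<le> (\<bar>B1\<bar> + \<bar>B2\<bar> + Ms) * dF p q"
  proof (intro ballI conjI)
    fix p q assume p: "p \<in> Fn" and q: "q \<in> Fn"
    have "dF p q \<le> K * dF (T p) (T q)" using T_lower[OF A HA C p q] by (simp add: K_def)
    thus "(1/K) * dF p q \<le> dF (T p) (T q)" using Kpos by (simp add: field_simps)
    show "dF (T p) (T q) \<le> (\<bar>B1\<bar> + \<bar>B2\<bar> + Ms) * dF p q" by (rule T_upper[OF B1 B2 p q])
  qed
  thus ?thesis unfolding bi_lipschitz_map_def using Kpos by (meson zero_less_divide_1_iff)
qed

lemma T_iso:
  assumes s1: "\<forall>x\<in>X. s x = 1" and iso: "isometric_map X dX dX H"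
  shows "isometric_map Fn dF dF T"
  unfolding isometric_map_def
proof (intro ballI)
  fix p q assume p: "p \<in> Fn" and q: "q \<in> Fn"
  obtain x t where pxt: "p = (x, t)" by (cases p)
  obtain y u where qyu: "q = (y, u)" by (cases q)
  have x: "x \<in> X" and y: "y \<in> X" using fence_D p q pxt qyu by auto
  have "dX (H x) (H y) = dX x y" using iso x y unfolding isometric_map_def by blast
  thus "dF (T p) (T q) = dF p q" using s1 x y pxt qyu by (simp add: dF_def T_def)
qed

end


theorem theorem5p4:
  fixes V :: "nat \<Rightarrow> 'v set" and E :: "nat \<Rightarrow> 'v \<Rightarrow> 'v \<Rightarrow> bool"
    and Psi :: "nat \<Rightarrow> 'v \<Rightarrow> 'v" and phiL phiU :: "nat \<Rightarrow> 'v \<Rightarrow> real"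
  assumes "F_system V E Psi phiL phiU"
    and "\<forall>n. \<forall>v\<in>V n. phiU n v > 0"
    and "condition_Gamma E Psi phiU"
    and "scissorhand V Psi phiL phiU"
  shows "\<exists>T. (continuous_map (Metric_space.mtopology (fence V Psi phiL phiU) dF)
                             (Metric_space.mtopology (fence V Psi phiL phiU) dF) T \<and>
            T ` fence V Psi phiL phiU = fence V Psi phiL phiU \<and>
            (\<forall>p\<in>fence V Psi phiL phiU. fst (T p) = HX V E Psi (fst p)) \<and>
            (\<forall>x\<in>Xsp V Psi. T (x, phi_lim phiU x) =
                 (HX V E Psi x, phi_lim phiU (HX V E Psi x)))) \<and>
         (\<forall>T'. (continuous_map (Metric_space.mtopology (fence V Psi phiL phiU) dF)
                               (Metric_space.mtopology (fence V Psi phiL phiU) dF) T' \<and>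
                T' ` fence V Psi phiL phiU = fence V Psi phiL phiU \<and>
                (\<forall>p\<in>fence V Psi phiL phiU. fst (T' p) = HX V E Psi (fst p)) \<and>
                (\<forall>x\<in>Xsp V Psi. T' (x, phi_lim phiU x) =
                     (HX V E Psi x, phi_lim phiU (HX V E Psi x))))
              \<longrightarrow> (\<forall>p\<in>fence V Psi phiL phiU. T' p = T p)) \<and>
         (homeomorphic_map (Metric_space.mtopology (Xsp V Psi) dX)
                           (Metric_space.mtopology (Xsp V Psi) dX) (HX V E Psi)
            \<longrightarrow> homeomorphic_map (Metric_space.mtopology (fence V Psi phiL phiU) dF)
                                 (Metric_space.mtopology (fence V Psi phiL phiU) dF) T) \<and>
         (lipschitz_map (Xsp V Psi) dX rdist (s_fun V E Psi phiU) \<and>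
          lipschitz_map (Xsp V Psi) dX dX (HX V E Psi)
            \<longrightarrow> lipschitz_map (fence V Psi phiL phiU) dF dF T) \<and>
         (lipschitz_map (Xsp V Psi) dX rdist (s_fun V E Psi phiU) \<and>
          lipschitz_map (Xsp V Psi) dX rdist (\<lambda>x. 1 / s_fun V E Psi phiU x) \<and>
          bi_lipschitz_map (Xsp V Psi) dX dX (HX V E Psi)
            \<longrightarrow> bi_lipschitz_map (fence V Psi phiL phiU) dF dF T) \<and>
         ((\<forall>x\<in>Xsp V Psi. s_fun V E Psi phiU x = 1) \<and>
          isometric_map (Xsp V Psi) dX dX (HX V E Psi)
            \<longrightarrow> isometric_map (fence V Psi phiL phiU) dF dF T)"
proof -
  interpret fsys V E Psi phiL phiU by unfold_locales (rule assms)+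
  show ?thesis
  proof (rule exI[where x = T], intro conjI)
    show "continuous_map (Metric_space.mtopology (fence V Psi phiL phiU) dF)
                             (Metric_space.mtopology (fence V Psi phiL phiU) dF) T"
      by (rule T_continuous)
    show "T ` fence V Psi phiL phiU = fence V Psi phiL phiU" by (rule T_surj)
    show "\<forall>p\<in>fence V Psi phiL phiU. fst (T p) = HX V E Psi (fst p)" by (simp add: T_def)
    show "\<forall>x\<in>Xsp V Psi. T (x, phi_lim phiU x) = (HX V E Psi x, phi_lim phiU (HX V E Psi x))"
      using T_graph by blast
    show "\<forall>T'. (continuous_map (Metric_space.mtopology (fence V Psi phiL phiU) dF)
                               (Metric_space.mtopology (fence V Psi phiL phiU) dF) T' \<and>
                T' ` fence V Psi phiL phiU = fence V Psi phiL phiU \<and>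
                (\<forall>p\<in>fence V Psi phiL phiU. fst (T' p) = HX V E Psi (fst p)) \<and>
                (\<forall>x\<in>Xsp V Psi. T' (x, phi_lim phiU x) =
                     (HX V E Psi x, phi_lim phiU (HX V E Psi x))))
              \<longrightarrow> (\<forall>p\<in>fence V Psi phiL phiU. T' p = T p)"
      using T_unique by blast
  qed (use T_homeo T_lip T_bilip T_iso in blast)+
qed


end
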